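(* Let $(\mathcal{H},\langle\cdot,\cdot\rangle)$ be a real Hilbert space with induced norm $\lVert\cdot\rVert$, let $\tau,\tau_s>0$, $\alpha>0$, let $g\in\mathcal{C}^0(\mathbb{R}_{\geq0},\mathbb{R}_{\geq0})$ be monotone increasing with $g(0)=0$, and let $V\in\mathcal{C}^1(\mathbb{R}^2,\mathbb{R})$. Let $\mathbf{u}\in\mathcal{H}\setminus\{0\}$ be constant and let $(\mathbf{x}(t),x_s(t))$ be a solution of $$\tau\dot{\mathbf{x}}=-\frac{\partial}{\partial\mathbf{x}}V(\lVert\mathbf{x}\rVert,x_s)+\alpha\mathbf{u},\qquad \tau_s\dot{x}_s=-x_s+g(\lVert\mathbf{x}\rVert)$$ with initial condition $(\mathbf{x}_0,x_{s,0})$. Then at every time where $\mathbf{x}\neq0$, $$\frac{\tau}{\alpha}\frac{d}{dt}\cos(\mathbf{x},\mathbf{u})=\frac{\lVert\mathbf{u}\rVert}{\lVert\mathbf{x}\rVert}\bigl(1-\cos^2(\mathbf{x},\mathbf{u})\bigr),$$ and, for $t\geq0$ such that $\mathbf{x}(s)\neq0$ for all $s\in[0,t]$ and $\cos(\mathbf{x}_0,\mathbf{u})\in(-1,1)$, the unique solution of this Riccati equation is $$\cos(\mathbf{x}(t),\mathbf{u})=\tanh\Bigl(\frac{\alpha\lVert\mathbf{u}\rVert}{\tau}\int_0^t\lVert\mathbf{x}(s)\rVert^{-1}\,ds+c_0\Bigr),\qquad c_0=\tanh^{-1}\bigl(\cos(\mathbf{x}_0,\mathbf{u})\bigr).$$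 In particular, suppose in addition that $x_{s,0}\geq0$, that there exist constants $a>0$, $b\geq0$ and an increasing $h\in\mathcal{C}^0(\mathbb{R}_{\geq0},\mathbb{R}_{\geq0})$ with $h(0)=0$ such that $ar-b\leq\frac{\partial}{\partial r}V(r,x_s)$ for all $r\geq0,x_s\geq0$ and $\frac{\partial}{\partial r}V(r,x_s)\leq h(\overline r)r$ for all $\overline r\geq0$, $r\in[0,\overline r]$, $x_s\in[0,|x_{s,0}|+g(\overline r)]$, and that $\lVert\mathbf{u}\rVert>b/\alpha$. Then $\lim_{t\to+\infty}\cos(\mathbf{x}(t),\mathbf{u})=1$.
   Context: $\frac{\partial}{\partial\mathbf{x}}V(\lVert\mathbf{x}\rVert,x_s)$ denotes the gradient in $\mathcal{H}$ of $\mathbf{x}\mapsto V(\lVert\mathbf{x}\rVert,x_s)$, equal to $\frac{\partial V}{\partial r}(\lVert\mathbf{x}\rVert,x_s)\,\mathbf{x}/\lVert\mathbf{x}\rVert$ for $\mathbf{x}\neq0$. For nonzero $\mathbf{x},\mathbf{u}$, $\cos(\mathbf{x},\mathbf{u})\triangleq\frac{\langle\mathbf{u},\mathbf{x}\rangle}{\lVert\mathbf{u}\rVert\lVert\mathbf{x}\rVert}$. Standing assumptions: solutions exist on $\mathbb{R}_{\geq0}$ for all initial conditions in $\mathcal{H}\times\mathbb{R}_{\geq0}$; moreover the scalar system $\dot r=-\frac{\partial}{\partial r}V(r,x_s)$ has an equilibrium at $r=0$ undergoing a subcritical pitchfork bifurcation at some $x_s=\underline x_s$ (there is $\overline x_s>\underline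 x_s$ such that: for $x_s<\underline x_s$ there are two locally asymptotically stable equilibria $\pm r^*$; for $\underline x_s<x_s<\overline x_s$ there are three locally asymptotically stable equilibria $-r^*,0,r^*$ with $\partial r^*/\partial x_s<0$; for $x_s>\overline x_s$, $r=0$ is globally asymptotically stable). *)

theory Defs
  imports "HOL-Analysis.Analysis"
begin

definition cosine :: "'a::real_inner \<Rightarrow> 'a \<Rightarrow> real" where
  "cosine x u = inner u x / (norm u * norm x)"

text \<open>Gradient in H of the map x \<mapsto> V(norm x, xs), where Vr is the partial derivative of
  V with respect to its first (radial) argument.\<close>
definition radial_grad :: "(real \<times> real \<Rightarrow> real) \<Rightarrow> 'a::real_normed_vector \<Rightarrow> real \<Rightarrow> 'a" where
  "radial_grad Vr x xs = (if x = 0 then 0 else (Vr (norm x, xs) / norm x) *\<^sub>R x)"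

end

theory Submission
  imports Defs
begin


lemma tanh_artanh_real:
  fixes z :: real assumes "-1 < z" "z < 1"
  shows "tanh (artanh z) = z"
proof -
  have a: "- 2 * artanh z = ln ((1 - z) / (1 + z))"
    using assms by (simp add: artanh_def ln_div)
  have e: "exp (- 2 * artanh z) = (1 - z) / (1 + z)"
    unfolding a using assms by simp
  show ?thesis unfolding tanh_real_altdef e using assms by (simp add: field_simps)
qed

lemma deriv_interior:
  fixes f :: "real \<Rightarrow> real"
  assumes "(f has_real_derivative D) (at t within {t0..})" "t0 < t"
  shows "(f has_real_derivative D) (at t)"
proof -
  have "(f has_real_derivative D) (at t within {t0<..})"
    using assms(1) by (rule DERIV_subset) auto
  thus ?thesis using assms(2) at_within_open[of t "{t0<..}"] by simp
qed

lemma barrier: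
  fixes f D :: "real \<Rightarrow> real"
  assumes der: "\<And>t. t \<ge> t0 \<Longrightarrow> (f has_real_derivative D t) (at t within {t0..})"
    and neg: "\<And>t. t > t0 \<Longrightarrow> f t > K \<Longrightarrow> D t \<le> 0"
    and tt: "t \<ge> t0"
  shows "f t \<le> max (f t0) K"
proof (rule ccontr)
  define M where "M = max (f t0) K"
  assume "\<not> f t \<le> max (f t0) K"
  hence ft: "f t > M" unfolding M_def by linarith
  have cont: "continuous_on {t0..} f"
    by (rule DERIV_continuous_on[of _ _ D]) (use der in auto)
  define S where "S = {s \<in> {t0..t}. f s \<le> M}"
  have clS: "closed S"
  proof -
    have "continuous_on {t0..t} f" using cont by (rule continuous_on_subset) auto
    hence "closed ({t0..t} \<inter> f -` {..M})"
      by (intro continuous_closed_preimage) auto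
    moreover have "S = {t0..t} \<inter> f -` {..M}" unfolding S_def by auto
    ultimately show ?thesis by simp
  qed
  have t0S: "t0 \<in> S" using tt unfolding S_def M_def by auto
  have bdd: "bdd_above S" unfolding S_def by auto
  define s where "s = Sup S"
  have sS: "s \<in> S" unfolding s_def using clS t0S bdd closed_contains_Sup by blast
  have st1: "s \<le> t" "f s \<le> M" using sS unfolding S_def by auto
  have st: "s < t" using st1 ft by (cases "s = t") auto
  have ts0: "t0 \<le> s" using sS unfolding S_def by auto
  have beyond: "f y > M" if "s < y" "y \<le> t" for y
  proof (rule ccontr)
    assume "\<not> f y > M"
    hence "y \<in> S" using that ts0 unfolding S_def by auto
    hence "y \<le> s" unfolding s_def using bdd by (simp add: cSup_upper)
    thus False using that by simp
  qed
  have "continuous_on {s..t} f" using cont by (rule continuous_on_subset) (use ts0 in auto)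
  moreover have "f differentiable (at y)" if "s < y" "y < t" for y
    using deriv_interior[OF der[of y]] that ts0 by (auto simp: real_differentiable_def)
  ultimately obtain l z where z: "s < z" "z < t" "DERIV f z :> l" "f t - f s = (t - s) * l"
    using MVT[OF st] by blast
  have "DERIV f z :> D z" using deriv_interior[OF der[of z]] z ts0 by auto
  hence "l = D z" using z(3) DERIV_unique by blast
  moreover have "D z \<le> 0" using neg[of z] beyond[of z] z ts0 unfolding M_def by auto
  ultimately have "(t - s) * l \<le> 0" using st by (simp add: mult_nonneg_nonpos)
  hence "f t \<le> f s" using z(4) by linarith
  thus False using sS ft unfolding S_def by auto
qed

lemma inner_vd:
  "(x has_vector_derivative x') F \<Longrightarrow> ((\<lambda>s. inner u (x s)) has_real_derivative inner u x') F"
  unfolding has_field_derivative_def has_vector_derivative_def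
proof -
  assume "(x has_derivative (\<lambda>h. h *\<^sub>R x')) F"
  from has_derivative_inner_right[OF this, of u]
  have "((\<lambda>s. inner u (x s)) has_derivative (\<lambda>h. h * inner u x')) F" by simp
  moreover have "(\<lambda>h. h * inner u x') = (*) (inner u x')" by (auto simp: mult.commute)
  ultimately show "((\<lambda>s. inner u (x s)) has_derivative (*) (inner u x')) F" by simp
qed

lemma inner_self_vd:
  assumes "(x has_vector_derivative x') (at t within S)"
  shows "((\<lambda>s. inner (x s) (x s)) has_real_derivative 2 * inner (x t) x') (at t within S)"
proof -
  have d: "(x has_derivative (\<lambda>h. h *\<^sub>R x')) (at t within S)"
    using assms unfolding has_vector_derivative_def .
  have "((\<lambda>s. inner (x s) (x s)) has_derivative
      (\<lambda>h. inner (x t) (h *\<^sub>R x') + inner (h *\<^sub>R x') (x t))) (at t within S)"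
    by (rule has_derivative_inner[OF d d])
  moreover have "(\<lambda>h. inner (x t) (h *\<^sub>R x') + inner (h *\<^sub>R x') (x t)) = (*) (2 * inner (x t) x')"
    by (auto simp: inner_commute algebra_simps)
  ultimately show ?thesis unfolding has_field_derivative_def by simp
qed

locale sysL =
  fixes V Vr Vs :: "real \<times> real \<Rightarrow> real"
    and g :: "real \<Rightarrow> real"
    and x :: "real \<Rightarrow> 'a::{real_inner, complete_space}"
    and xs :: "real \<Rightarrow> real"
    and u :: 'a
    and \<tau> \<tau>s \<alpha> :: real
  assumes tau_pos: "\<tau> > 0" and taus_pos: "\<tau>s > 0" and alpha_pos: "\<alpha> > 0"
    and g_cont: "continuous_on {0..} g" and g_mono: "mono_on {0..} g"
    and g_nonneg: "\<forall>r\<ge>0. g r \<ge> 0" and g0: "g 0 = 0"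
    and u_nz: "u \<noteq> 0"
    and ode_x: "\<forall>t\<ge>0. (x has_vector_derivative
                  (1 / \<tau>) *\<^sub>R (- radial_grad Vr (x t) (xs t) + \<alpha> *\<^sub>R u)) (at t within {0..})"
    and ode_xs: "\<forall>t\<ge>0. (xs has_real_derivative
                  (1 / \<tau>s) * (- xs t + g (norm (x t)))) (at t within {0..})"
begin

definition k where "k t = (if x t = 0 then 0 else Vr (norm (x t), xs t) / norm (x t))"
definition P where "P t = inner u (x t)"
definition N where "N t = inner (x t) (x t)"

lemma rg_eq: "radial_grad Vr (x t) (xs t) = k t *\<^sub>R x t"
  unfolding radial_grad_def k_def by auto

lemma xd: "t \<ge> 0 \<Longrightarrow> (x has_vector_derivative (1 / \<tau>) *\<^sub>R (\<alpha> *\<^sub>R u - k t *\<^sub>R x t)) (at t within {0..})"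
  using ode_x rg_eq by (simp add: algebra_simps)

lemma x_cont: "continuous_on {0..} x"
  by (rule continuous_on_vector_derivative[OF xd]) auto

lemma Pd: "t \<ge> 0 \<Longrightarrow> (P has_real_derivative (\<alpha> * (norm u)\<^sup>2 - k t * P t) / \<tau>) (at t within {0..})"
  unfolding P_def[abs_def] using inner_vd[OF xd, of t u]
  by (simp add: power2_norm_eq_inner inner_diff_right diff_divide_distrib)

lemma Nd: "t \<ge> 0 \<Longrightarrow> (N has_real_derivative 2 * (\<alpha> * P t - k t * N t) / \<tau>) (at t within {0..})"
  unfolding N_def[abs_def] using inner_self_vd[OF xd, of t]
  by (simp add: P_def inner_diff_right inner_commute)

lemma N_norm: "N t = (norm (x t))\<^sup>2"
  unfolding N_def by (simp add: power2_norm_eq_inner)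

lemma kN: "k t * N t = Vr (norm (x t), xs t) * norm (x t)"
  unfolding k_def N_norm by (auto simp: power2_eq_square)

lemma kP: "x t \<noteq> 0 \<Longrightarrow> k t * P t = Vr (norm (x t), xs t) / norm (x t) * P t"
  unfolding k_def by auto

lemma cos_eq: "cosine (x t) u = P t / (norm u * sqrt (N t))"
  unfolding cosine_def P_def N_def by (simp add: norm_eq_sqrt_inner)

end

context sysL begin

lemma part1:
  assumes t: "t \<ge> 0" and xt: "x t \<noteq> 0"
  shows "((\<lambda>s. cosine (x s) u) has_real_derivative
           (\<alpha> * norm u / (\<tau> * norm (x t))) * (1 - (cosine (x t) u)\<^sup>2)) (at t within {0..})"
proof -
  define \<rho> where "\<rho> = norm (x t)"
  have rpos: "\<rho> > 0" using xt unfolding \<rho>_def by simp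
  have Nt: "N t = \<rho>\<^sup>2" unfolding \<rho>_def N_norm ..
  have sN: "sqrt (N t) = \<rho>" using Nt rpos by simp
  have Npos: "N t > 0" using Nt rpos by simp
  have sq: "((\<lambda>s. sqrt (N s)) has_real_derivative inverse (sqrt (N t)) / 2 * (2 * (\<alpha> * P t - k t * N t) / \<tau>)) (at t within {0..})"
    by (rule DERIV_chain2[OF DERIV_real_sqrt[OF Npos] Nd[OF t]])
  have sq2: "((\<lambda>s. norm u * sqrt (N s)) has_real_derivative norm u * (inverse (sqrt (N t)) / 2 * (2 * (\<alpha> * P t - k t * N t) / \<tau>))) (at t within {0..})"
    by (rule DERIV_cmult[OF sq])
  have nz: "norm u * sqrt (N t) \<noteq> 0" using u_nz sN rpos by simp
  have c: "((\<lambda>s. P s / (norm u * sqrt (N s))) has_real_derivative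
     ((\<alpha> * (norm u)\<^sup>2 - k t * P t) / \<tau> * (norm u * sqrt (N t)) - P t * (norm u * (inverse (sqrt (N t)) / 2 * (2 * (\<alpha> * P t - k t * N t) / \<tau>))))
      / (norm u * sqrt (N t) * (norm u * sqrt (N t)))) (at t within {0..})"
    by (rule DERIV_divide[OF Pd[OF t] sq2 nz])
  have eq: "((\<alpha> * (norm u)\<^sup>2 - k t * P t) / \<tau> * (norm u * sqrt (N t)) - P t * (norm u * (inverse (sqrt (N t)) / 2 * (2 * (\<alpha> * P t - k t * N t) / \<tau>))))
      / (norm u * sqrt (N t) * (norm u * sqrt (N t))) = (\<alpha> * norm u / (\<tau> * norm (x t))) * (1 - (P t / (norm u * sqrt (N t)))\<^sup>2)"
    unfolding sN Nt \<rho>_def[symmetric] using rpos u_nz tau_pos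
    by (simp add: field_simps power2_eq_square)
  show ?thesis unfolding cos_eq using c eq by simp
qed

end

context sysL begin

lemma part2:
  assumes t: "t \<ge> 0" and nz: "\<forall>s\<in>{0..t}. x s \<noteq> 0" and c0: "cosine (x 0) u \<in> {-1<..<1}"
  shows "cosine (x t) u = tanh (\<alpha> * norm u / \<tau> * integral {0..t} (\<lambda>s. 1 / norm (x s))
                  + artanh (cosine (x 0) u))"
proof -
  define c where "c s = cosine (x s) u" for s
  define K where "K = \<alpha> * norm u / \<tau>"
  define r where "r s = 1 / norm (x s)" for s
  define A where "A = artanh (c 0)"
  define I where "I s = integral {0..s} r" for s
  define f where "f s = tanh (K * I s + A)" for s
  have xc: "continuous_on {0..t} x" using x_cont by (rule continuous_on_subset) auto
  have rc: "continuous_on {0..t} r" unfolding r_def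
    by (intro continuous_intros xc) (use nz in auto)
  have Id: "(I has_real_derivative r s) (at s within {0..t})" if "s \<in> {0..t}" for s
    unfolding I_def[abs_def] using integral_has_real_derivative[OF rc that] .
  have fd: "(f has_real_derivative (1 - f s ^ 2) * (K * r s)) (at s within {0..t})" if "s \<in> {0..t}" for s
  proof -
    have "((\<lambda>s. K * I s + A) has_real_derivative K * r s) (at s within {0..t})"
      using Id[OF that] by (auto intro!: derivative_eq_intros)
    from has_field_derivative_tanh[OF _ this]
    show ?thesis unfolding f_def by simp
  qed
  have cd: "(c has_real_derivative K * r s * (1 - c s ^ 2)) (at s within {0..t})" if "s \<in> {0..t}" for s
  proof -
    have "(c has_real_derivative (\<alpha> * norm u / (\<tau> * norm (x s))) * (1 - (c s)\<^sup>2)) (at s within {0..})"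
      unfolding c_def[abs_def] using part1[of s] that nz by auto
    hence "(c has_real_derivative (\<alpha> * norm u / (\<tau> * norm (x s))) * (1 - (c s)\<^sup>2)) (at s within {0..t})"
      by (rule DERIV_subset) auto
    moreover have "\<alpha> * norm u / (\<tau> * norm (x s)) = K * r s" unfolding K_def r_def by simp
    ultimately show ?thesis by simp
  qed
  have cc: "continuous_on {0..t} c" by (rule DERIV_continuous_on[OF cd])
  have fc: "continuous_on {0..t} f" by (rule DERIV_continuous_on[OF fd])
  define q where "q s = K * r s * (c s + f s)" for s
  have qc: "continuous_on {0..t} q" unfolding q_def by (intro continuous_intros rc cc fc)
  define Q where "Q s = integral {0..s} q" for s
  have Qd: "(Q has_real_derivative q s) (at s within {0..t})" if "s \<in> {0..t}" for s
    unfolding Q_def[abs_def] using integral_has_real_derivative[OF qc that] .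
  define G where "G s = (c s - f s) * exp (Q s)" for s
  have Gd: "(G has_real_derivative 0) (at s within {0..t})" if "s \<in> {0..t}" for s
  proof -
    have e: "((\<lambda>s. exp (Q s)) has_real_derivative exp (Q s) * q s) (at s within {0..t})"
      by (rule DERIV_chain2[OF DERIV_exp Qd[OF that]])
    have "(G has_real_derivative (c s - f s) * (exp (Q s) * q s) +
        (K * r s * (1 - c s ^ 2) - (1 - f s ^ 2) * (K * r s)) * exp (Q s)) (at s within {0..t})"
      unfolding G_def[abs_def] by (rule DERIV_mult'[OF DERIV_diff[OF cd[OF that] fd[OF that]] e])
    moreover have "(c s - f s) * (exp (Q s) * q s) +
        (K * r s * (1 - c s ^ 2) - (1 - f s ^ 2) * (K * r s)) * exp (Q s) = 0"
      unfolding q_def by (simp add: algebra_simps power2_eq_square)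
    ultimately show ?thesis by simp
  qed
  obtain C where C: "\<forall>s\<in>{0..t}. G s = C"
    using has_field_derivative_zero_constant[of "{0..t}" G] Gd by (auto simp: convex_real_interval)
  have "f 0 = c 0" unfolding f_def I_def A_def using c0 unfolding c_def
    by (simp add: tanh_artanh_real)
  hence "G 0 = 0" unfolding G_def by simp
  hence "G t = 0" using C t by force
  hence "c t = f t" unfolding G_def by simp
  thus ?thesis unfolding c_def f_def K_def I_def A_def r_def by simp
qed

end

lemma exp_lin_deriv: "((\<lambda>s. exp (c * s)) has_real_derivative exp (c * s) * c) (at s within S)"
  by (rule DERIV_chain2[OF DERIV_exp]) (auto intro!: derivative_eq_intros)

context sysL begin

lemma xs_nonneg:
  assumes xs0: "xs 0 \<ge> 0" and t: "t \<ge> 0"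
  shows "xs t \<ge> 0"
proof -
  define c where "c = 1 / \<tau>s"
  define f where "f s = - (xs s * exp (c * s))" for s
  have fd: "(f has_real_derivative - (xs s * (exp (c * s) * c) + (1 / \<tau>s) * (- xs s + g (norm (x s))) * exp (c * s)))
     (at s within {0..})" if "s \<ge> 0" for s
    unfolding f_def[abs_def]
    by (rule DERIV_minus[OF DERIV_mult'[OF ode_xs[rule_format, OF that] exp_lin_deriv]])
  have "f t \<le> max (f 0) 0"
  proof (rule barrier[OF fd _ t])
    fix s :: real assume "s > 0"
    hence "g (norm (x s)) \<ge> 0" using g_nonneg by auto
    thus "- (xs s * (exp (c * s) * c) + (1 / \<tau>s) * (- xs s + g (norm (x s))) * exp (c * s)) \<le> 0"
      unfolding c_def using taus_pos by (simp add: algebra_simps)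
  qed auto
  hence "xs t * exp (c * t) \<ge> 0" unfolding f_def using xs0 by simp
  thus ?thesis by (simp add: zero_le_mult_iff)
qed

end

context sysL begin

lemma P_le: "P t \<le> norm u * norm (x t)"
  unfolding P_def using norm_cauchy_schwarz[of u "x t"] by simp

lemma absP_le: "\<bar>P t\<bar> \<le> norm u * norm (x t)"
  unfolding P_def using Cauchy_Schwarz_ineq2[of u "x t"] by simp

lemma norm_bound:
  assumes xs0: "xs 0 \<ge> 0" and apos: "a > 0" and bnn: "b \<ge> 0"
    and lower: "\<forall>r\<ge>0. \<forall>z\<ge>0. a * r - b \<le> Vr (r, z)"
    and t: "t \<ge> 0"
  shows "norm (x t) \<le> max (norm (x 0)) ((\<alpha> * norm u + b) / a)"
proof -
  define R0 where "R0 = (\<alpha> * norm u + b) / a"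
  have R0pos: "R0 > 0" unfolding R0_def using apos alpha_pos u_nz bnn by (simp add: add_pos_nonneg)
  have "N t \<le> max (N 0) (R0\<^sup>2)"
  proof (rule barrier[OF Nd _ t])
    fix s :: real assume s: "s > 0" and Ns: "N s > R0\<^sup>2"
    define \<rho> where "\<rho> = norm (x s)"
    have "R0\<^sup>2 < \<rho>\<^sup>2" using Ns unfolding N_norm \<rho>_def .
    hence rR: "R0 < \<rho>" by (rule power_less_imp_less_base) (simp add: \<rho>_def)
    hence rpos: "\<rho> > 0" using R0pos by simp
    have low: "a * \<rho> - b \<le> Vr (\<rho>, xs s)" using lower xs_nonneg[OF xs0, of s] s rpos by auto
    have "(a * \<rho> - b) * \<rho> \<le> Vr (\<rho>, xs s) * \<rho>" using low rpos by (simp add: mult_right_mono)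
    hence kN': "k s * N s \<ge> (a * \<rho> - b) * \<rho>" using kN[of s] unfolding \<rho>_def by simp
    have Pb: "P s \<le> norm u * \<rho>" using P_le[of s] unfolding \<rho>_def .
    have "a * \<rho> > \<alpha> * norm u + b" using rR apos unfolding R0_def by (simp add: field_simps)
    hence e3: "\<rho> * (\<alpha> * norm u + b - a * \<rho>) \<le> 0" using rpos by (simp add: mult_nonneg_nonpos)
    have e1: "\<alpha> * P s \<le> \<alpha> * (norm u * \<rho>)"
      using Pb alpha_pos by (simp add: mult_left_mono)
    have "\<alpha> * P s - k s * N s \<le> \<alpha> * (norm u * \<rho>) - (a * \<rho> - b) * \<rho>"
      using e1 kN' by linarith
    also have "\<dots> = \<rho> * (\<alpha> * norm u + b - a * \<rho>)" by (simp add: algebra_simps)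
    finally have "\<alpha> * P s - k s * N s \<le> 0" using e3 by linarith
    thus "2 * (\<alpha> * P s - k s * N s) / \<tau> \<le> 0" using tau_pos by (simp add: divide_nonpos_pos)
  qed auto
  hence "(norm (x t))\<^sup>2 \<le> (max (norm (x 0)) R0)\<^sup>2"
    unfolding N_norm using R0pos by (auto simp: max_def power_mono)
  hence "norm (x t) \<le> max (norm (x 0)) R0"
    by (rule power2_le_imp_le) (use R0pos in auto)
  thus ?thesis unfolding R0_def .
qed

end

context sysL begin

lemma xs_upper:
  assumes xs0: "xs 0 \<ge> 0" and apos: "a > 0" and bnn: "b \<ge> 0"
    and lower: "\<forall>r\<ge>0. \<forall>z\<ge>0. a * r - b \<le> Vr (r, z)"
    and t: "t \<ge> 0"
  shows "xs t \<le> xs 0 + g (max (norm (x 0)) ((\<alpha> * norm u + b) / a))"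
proof -
  define Rb where "Rb = max (norm (x 0)) ((\<alpha> * norm u + b) / a)"
  have Rb0: "Rb \<ge> 0" unfolding Rb_def by (simp add: le_max_iff_disj)
  have gR: "g Rb \<ge> 0" using g_nonneg Rb0 by auto
  define c where "c = 1 / \<tau>s"
  define f where "f s = (xs s - g Rb) * exp (c * s)" for s
  have fd: "(f has_real_derivative (xs s - g Rb) * (exp (c * s) * c) + ((1 / \<tau>s) * (- xs s + g (norm (x s))) - 0) * exp (c * s))
     (at s within {0..})" if "s \<ge> 0" for s
    unfolding f_def[abs_def]
    by (rule DERIV_mult'[OF DERIV_diff[OF ode_xs[rule_format, OF that] DERIV_const] exp_lin_deriv])
  have "f t \<le> max (f 0) (f 0)"
  proof (rule barrier[OF fd _ t])
    fix s :: real assume "s > 0"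
    hence "norm (x s) \<le> Rb" using norm_bound[OF xs0 apos bnn lower, of s] unfolding Rb_def by simp
    hence "g (norm (x s)) \<le> g Rb" using g_mono Rb0 by (auto intro: mono_onD)
    hence "(g (norm (x s)) - g Rb) * exp (c * s) * c \<le> 0"
      unfolding c_def using taus_pos by (intro mult_nonpos_nonneg) auto
    moreover have "(xs s - g Rb) * (exp (c * s) * c) + ((1 / \<tau>s) * (- xs s + g (norm (x s))) - 0) * exp (c * s)
       = (g (norm (x s)) - g Rb) * exp (c * s) * c"
      unfolding c_def by (simp add: algebra_simps diff_divide_distrib add_divide_distrib)
    ultimately show "(xs s - g Rb) * (exp (c * s) * c) + ((1 / \<tau>s) * (- xs s + g (norm (x s))) - 0) * exp (c * s) \<le> 0"
      by linarith
  qed auto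
  hence fe: "(xs t - g Rb) * exp (c * t) \<le> xs 0 - g Rb" unfolding f_def by simp
  have "xs t - g Rb \<le> xs 0"
  proof (cases "xs t - g Rb \<le> 0")
    case True thus ?thesis using xs0 by simp
  next
    case False
    have "exp (c * t) \<ge> 1" unfolding c_def using t taus_pos by simp
    hence "(xs t - g Rb) * 1 \<le> (xs t - g Rb) * exp (c * t)" using False
      by (intro mult_left_mono) auto
    thus ?thesis using fe gR by simp
  qed
  thus ?thesis unfolding Rb_def by simp
qed

end

context sysL begin

lemma part3:
  assumes xs0: "xs 0 \<ge> 0" and apos: "a > 0" and bnn: "b \<ge> 0"
    and h_nonneg: "\<forall>r\<ge>0. h r \<ge> 0"
    and lower: "\<forall>r\<ge>0. \<forall>z\<ge>0. a * r - b \<le> Vr (r, z)"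
    and upper: "\<forall>rb\<ge>0. \<forall>r\<in>{0..rb}. \<forall>z\<in>{0..\<bar>xs 0\<bar> + g rb}. Vr (r, z) \<le> h rb * r"
    and ub: "norm u > b / \<alpha>"
  shows "((\<lambda>t. cosine (x t) u) \<longlongrightarrow> 1) at_top"
proof -
  define R0 where "R0 = (\<alpha> * norm u + b) / a"
  define Rb where "Rb = max (norm (x 0)) R0"
  have R0pos: "R0 > 0" unfolding R0_def using apos alpha_pos u_nz bnn by (simp add: add_pos_nonneg)
  have Rbpos: "Rb > 0" unfolding Rb_def using R0pos by (simp add: less_max_iff_disj)
  define H where "H = h Rb"
  have H0: "H \<ge> 0" unfolding H_def using h_nonneg Rbpos by auto
  have nu: "norm u > 0" using u_nz by simp
  have rho_le: "norm (x t) \<le> Rb" if "t \<ge> 0" for t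
    using norm_bound[OF xs0 apos bnn lower that] unfolding Rb_def R0_def .
  have Vr_up: "Vr (norm (x t), xs t) \<le> H * norm (x t)" if "t \<ge> 0" for t
  proof -
    have "xs t \<in> {0..\<bar>xs 0\<bar> + g Rb}"
      using xs_nonneg[OF xs0 that] xs_upper[OF xs0 apos bnn lower that] xs0
      unfolding Rb_def R0_def by auto
    moreover have "norm (x t) \<in> {0..Rb}" using rho_le[OF that] by simp
    ultimately show ?thesis using upper Rbpos unfolding H_def by auto
  qed
  have Vr_low: "a * norm (x t) - b \<le> Vr (norm (x t), xs t)" if "t \<ge> 0" for t
    using lower xs_nonneg[OF xs0 that] by auto
  define \<delta> where "\<delta> = norm u * (\<alpha> * norm u - b)"
  have \<delta>pos: "\<delta> > 0" unfolding \<delta>_def using ub alpha_pos nu by (simp add: field_simps)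
  have kP_neg: "k t * P t \<le> b * norm u" if "t \<ge> 0" "P t \<le> 0" for t
  proof (cases "x t = 0")
    case True thus ?thesis unfolding k_def using bnn nu by simp
  next
    case False
    define \<rho> where "\<rho> = norm (x t)"
    have rpos: "\<rho> > 0" using False unfolding \<rho>_def by simp
    have "(a * \<rho> - b) * (- P t) \<le> Vr (\<rho>, xs t) * (- P t)"
      using Vr_low[OF that(1)] that(2) unfolding \<rho>_def by (intro mult_right_mono) auto
    hence "Vr (\<rho>, xs t) * P t \<le> (a * \<rho> - b) * P t" by simp
    also have "\<dots> \<le> - b * P t" using apos rpos that(2) by (simp add: algebra_simps mult_nonneg_nonpos)
    also have "\<dots> \<le> b * (norm u * \<rho>)"
    proof -
      have "- P t \<le> norm u * \<rho>" using absP_le[of t] unfolding \<rho>_def by linarith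
      hence "b * (- P t) \<le> b * (norm u * \<rho>)" using bnn by (rule mult_left_mono)
      thus ?thesis by simp
    qed
    finally have "Vr (\<rho>, xs t) * P t \<le> b * norm u * \<rho>" by simp
    hence "Vr (\<rho>, xs t) / \<rho> * P t \<le> b * norm u" using rpos by (simp add: field_simps)
    thus ?thesis using kP[OF False] unfolding \<rho>_def by simp
  qed
  have kP_pos: "k t * P t \<le> H * P t" if "t \<ge> 0" "P t > 0" for t
  proof (cases "x t = 0")
    case True thus ?thesis unfolding k_def using H0 that by simp
  next
    case False
    have "Vr (norm (x t), xs t) / norm (x t) \<le> H" using Vr_up[OF that(1)] False by (simp add: field_simps)
    hence "Vr (norm (x t), xs t) / norm (x t) * P t \<le> H * P t" using that(2) by (intro mult_right_mono) auto
    thus ?thesis using kP[OF False] by simp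
  qed
  have "\<exists>t1\<ge>0. P t1 > 0"
  proof (rule ccontr)
    assume nex: "\<not> (\<exists>t1\<ge>0. P t1 > 0)"
    hence allneg: "P t \<le> 0" if "t \<ge> 0" for t using that by (meson not_le)
    define f where "f s = \<delta> / \<tau> * s - P s" for s
    have fd: "(f has_real_derivative \<delta> / \<tau> * 1 - (\<alpha> * (norm u)\<^sup>2 - k s * P s) / \<tau>) (at s within {0..})" if "s \<ge> 0" for s
      unfolding f_def[abs_def] by (intro DERIV_diff DERIV_cmult Pd that DERIV_ident)
    define T where "T = (\<bar>P 0\<bar> + 1) * \<tau> / \<delta>"
    have T0: "T \<ge> 0" unfolding T_def using \<delta>pos tau_pos by simp
    have "f T \<le> max (f 0) (f 0)"
    proof (rule barrier[OF fd _ T0])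
      fix s :: real assume s: "s > 0"
      have "k s * P s \<le> b * norm u" using kP_neg[of s] allneg[of s] s by simp
      hence "\<delta> \<le> \<alpha> * (norm u)\<^sup>2 - k s * P s" unfolding \<delta>_def by (simp add: algebra_simps power2_eq_square)
      thus "\<delta> / \<tau> * 1 - (\<alpha> * (norm u)\<^sup>2 - k s * P s) / \<tau> \<le> 0" using tau_pos
        by (simp add: divide_right_mono diff_divide_distrib[symmetric] divide_nonpos_pos)
    qed auto
    hence "\<delta> / \<tau> * T - P T \<le> - P 0" unfolding f_def by simp
    moreover have "\<delta> / \<tau> * T = \<bar>P 0\<bar> + 1" unfolding T_def using \<delta>pos tau_pos by simp
    ultimately have "P T > 0" by (smt (verit))
    thus False using allneg[OF T0] by simp
  qed
  then obtain t1 where t1: "t1 \<ge> 0" "P t1 > 0" by blast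
  define \<epsilon> where "\<epsilon> = min (P t1) (\<alpha> * (norm u)\<^sup>2 / (H + 1))"
  have \<epsilon>pos: "\<epsilon> > 0" unfolding \<epsilon>_def using t1 alpha_pos nu H0 by simp
  have Ppos: "P t \<ge> \<epsilon>" if "t \<ge> t1" for t
  proof -
    have fd: "((\<lambda>s. - P s) has_real_derivative - ((\<alpha> * (norm u)\<^sup>2 - k s * P s) / \<tau>)) (at s within {t1..})"
      if "s \<ge> t1" for s
      by (rule DERIV_minus[OF DERIV_subset[OF Pd]]) (use that t1 in auto)
    have "- P t \<le> max (- P t1) (- \<epsilon>)"
    proof (rule barrier[OF fd _ that])
      fix s :: real assume s: "s > t1" and ps: "- P s > - \<epsilon>"
      have s0: "s \<ge> 0" using s t1 by simp
      have "k s * P s < \<alpha> * (norm u)\<^sup>2"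
      proof (cases "P s \<le> 0")
        case True
        hence "k s * P s \<le> b * norm u" using kP_neg s0 by simp
        thus ?thesis using \<delta>pos unfolding \<delta>_def by (simp add: algebra_simps power2_eq_square)
      next
        case False
        hence "k s * P s \<le> H * P s" using kP_pos s0 by simp
        also have "\<dots> \<le> H * \<epsilon>" using ps H0 by (simp add: mult_left_mono)
        also have "\<dots> \<le> H * (\<alpha> * (norm u)\<^sup>2 / (H + 1))" unfolding \<epsilon>_def using H0
          by (intro mult_left_mono) auto
        also have "\<dots> < \<alpha> * (norm u)\<^sup>2" using H0 alpha_pos nu by (simp add: field_simps)
        finally show ?thesis .
      qed
      thus "- ((\<alpha> * (norm u)\<^sup>2 - k s * P s) / \<tau>) \<le> 0" using tau_pos by simp
    qed
    moreover have "\<epsilon> \<le> P t1" unfolding \<epsilon>_def by simp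
    ultimately show ?thesis by simp
  qed
  define W where "W s = (norm u)\<^sup>2 * N s / (P s * P s) - 1" for s
  define lam where "lam = 2 * \<alpha> * norm u / (\<tau> * Rb)"
  have lampos: "lam > 0" unfolding lam_def using alpha_pos nu tau_pos Rbpos by simp
  have W0: "W s \<ge> 0" if "s \<ge> t1" for s
  proof -
    have ps: "P s > 0" using Ppos[OF that] \<epsilon>pos by simp
    have "\<bar>P s\<bar> \<le> \<bar>norm u * norm (x s)\<bar>" using absP_le[of s] by simp
    hence "(P s)\<^sup>2 \<le> (norm u * norm (x s))\<^sup>2" by (simp only: abs_le_square_iff)
    hence "P s * P s \<le> (norm u)\<^sup>2 * N s" unfolding N_norm by (simp add: power2_eq_square power_mult_distrib mult_ac)
    thus ?thesis unfolding W_def using ps by (simp add: field_simps)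
  qed
  have Wd: "(W has_real_derivative - (2 * \<alpha> * (norm u)\<^sup>2 / (\<tau> * P s)) * W s) (at s within {t1..})"
    if "s \<ge> t1" for s
  proof -
    have s0: "s \<ge> 0" using that t1 by simp
    have ps: "P s > 0" using Ppos[OF that] \<epsilon>pos by simp
    have Pd1: "(P has_real_derivative (\<alpha> * (norm u)\<^sup>2 - k s * P s) / \<tau>) (at s within {t1..})"
      by (rule DERIV_subset[OF Pd[OF s0]]) (use t1 in auto)
    have Nd1: "(N has_real_derivative 2 * (\<alpha> * P s - k s * N s) / \<tau>) (at s within {t1..})"
      by (rule DERIV_subset[OF Nd[OF s0]]) (use t1 in auto)
    have d: "(W has_real_derivative
      (((norm u)\<^sup>2 * (2 * (\<alpha> * P s - k s * N s) / \<tau>)) * (P s * P s) - (norm u)\<^sup>2 * N s *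
        (P s * ((\<alpha> * (norm u)\<^sup>2 - k s * P s) / \<tau>) + (\<alpha> * (norm u)\<^sup>2 - k s * P s) / \<tau> * P s))
       / (P s * P s * (P s * P s)) - 0) (at s within {t1..})"
      unfolding W_def[abs_def]
      by (rule DERIV_diff[OF DERIV_divide[OF DERIV_cmult[OF Nd1] DERIV_mult'[OF Pd1 Pd1]] DERIV_const])
         (use ps in simp)
    have eq: "(((norm u)\<^sup>2 * (2 * (\<alpha> * P s - k s * N s) / \<tau>)) * (P s * P s) - (norm u)\<^sup>2 * N s *
        (P s * ((\<alpha> * (norm u)\<^sup>2 - k s * P s) / \<tau>) + (\<alpha> * (norm u)\<^sup>2 - k s * P s) / \<tau> * P s))
       / (P s * P s * (P s * P s)) - 0 = - (2 * \<alpha> * (norm u)\<^sup>2 / (\<tau> * P s)) * W s"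
      unfolding W_def using ps tau_pos by (simp add: field_simps power2_eq_square)
    show ?thesis using d eq by simp
  qed
  define f where "f s = W s * exp (lam * s)" for s
  have fd: "(f has_real_derivative W s * (exp (lam * s) * lam) + - (2 * \<alpha> * (norm u)\<^sup>2 / (\<tau> * P s)) * W s * exp (lam * s))
     (at s within {t1..})" if "s \<ge> t1" for s
    unfolding f_def[abs_def] by (rule DERIV_mult'[OF Wd[OF that] exp_lin_deriv])
  have Wbound: "W t \<le> W t1 * exp (lam * t1) * exp (- (lam * t))" if "t \<ge> t1" for t
  proof -
    have "f t \<le> max (f t1) (f t1)"
    proof (rule barrier[OF fd _ that])
      fix s :: real assume s: "s > t1"
      have s0: "s \<ge> 0" using s t1 by simp
      have ps: "P s > 0" using Ppos[of s] \<epsilon>pos s by simp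
      have "norm u * norm (x s) \<le> norm u * Rb" using rho_le[OF s0] nu by (intro mult_left_mono) auto
      hence "P s \<le> norm u * Rb" using P_le[of s] by linarith
      hence "\<tau> * P s \<le> \<tau> * (norm u * Rb)" using tau_pos by simp
      hence "2 * \<alpha> * (norm u)\<^sup>2 / (\<tau> * (norm u * Rb)) \<le> 2 * \<alpha> * (norm u)\<^sup>2 / (\<tau> * P s)"
        using ps tau_pos alpha_pos by (intro frac_le) auto
      moreover have "lam = 2 * \<alpha> * (norm u)\<^sup>2 / (\<tau> * (norm u * Rb))" unfolding lam_def using nu
        by (simp add: power2_eq_square)
      ultimately have "lam \<le> 2 * \<alpha> * (norm u)\<^sup>2 / (\<tau> * P s)" by simp
      hence "W s * (lam - 2 * \<alpha> * (norm u)\<^sup>2 / (\<tau> * P s)) * exp (lam * s) \<le> 0"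
        using W0[of s] s by (intro mult_nonpos_nonneg mult_nonneg_nonpos) auto
      thus "W s * (exp (lam * s) * lam) + - (2 * \<alpha> * (norm u)\<^sup>2 / (\<tau> * P s)) * W s * exp (lam * s) \<le> 0"
        by (simp add: algebra_simps)
    qed
    hence "W t * exp (lam * t) \<le> W t1 * exp (lam * t1)" unfolding f_def by simp
    hence "W t * exp (lam * t) * exp (- (lam * t)) \<le> W t1 * exp (lam * t1) * exp (- (lam * t))"
      by (rule mult_right_mono) simp
    moreover have "exp (lam * t) * exp (- (lam * t)) = 1" by (simp add: exp_add[symmetric])
    ultimately show ?thesis by (simp add: mult.assoc)
  qed
  have Wlim: "(W \<longlongrightarrow> 0) at_top"
  proof (rule tendsto_sandwich[of "\<lambda>_. 0" W at_top "\<lambda>t. W t1 * exp (lam * t1) * exp (- (lam * t))"])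
    show "\<forall>\<^sub>F t in at_top. 0 \<le> W t" using W0 by (auto simp: eventually_at_top_linorder)
    show "\<forall>\<^sub>F t in at_top. W t \<le> W t1 * exp (lam * t1) * exp (- (lam * t))"
      using Wbound by (auto simp: eventually_at_top_linorder)
    show "((\<lambda>_. 0) \<longlongrightarrow> (0::real)) at_top" by simp
    have "filterlim (\<lambda>t. lam * t) at_top at_top"
      by (rule filterlim_tendsto_pos_mult_at_top[OF tendsto_const lampos filterlim_ident])
    hence "filterlim (\<lambda>t. - (lam * t)) at_bot at_top" by (simp add: filterlim_uminus_at_bot)
    hence "((\<lambda>t. exp (- (lam * t))) \<longlongrightarrow> 0) at_top" by (rule filterlim_compose[OF exp_at_bot])
    thus "((\<lambda>t. W t1 * exp (lam * t1) * exp (- (lam * t))) \<longlongrightarrow> 0) at_top"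
      using tendsto_mult_right_zero by blast
  qed
  have "((\<lambda>t. 1 / sqrt (1 + W t)) \<longlongrightarrow> 1 / sqrt (1 + 0)) at_top"
    by (intro tendsto_intros Wlim) simp
  hence lim: "((\<lambda>t. 1 / sqrt (1 + W t)) \<longlongrightarrow> 1) at_top" by simp
  have ev: "\<forall>\<^sub>F t in at_top. 1 / sqrt (1 + W t) = cosine (x t) u"
    unfolding eventually_at_top_linorder
  proof (intro exI allI impI)
    fix t assume t: "t \<ge> t1"
    have ps: "P t > 0" using Ppos[OF t] \<epsilon>pos by simp
    have Npos: "N t > 0"
    proof -
      have "x t \<noteq> 0" using ps unfolding P_def by auto
      thus ?thesis unfolding N_norm by simp
    qed
    have "1 + W t = (norm u * sqrt (N t) / P t)\<^sup>2" unfolding W_def using ps Npos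
      by (simp add: power_divide power_mult_distrib power2_eq_square)
    hence "sqrt (1 + W t) = norm u * sqrt (N t) / P t" using ps Npos by simp
    thus "1 / sqrt (1 + W t) = cosine (x t) u" unfolding cos_eq by simp
  qed
  show ?thesis using tendsto_cong[OF ev] lim by simp
qed

end


theorem theorem2:
  fixes V Vr Vs :: "real \<times> real \<Rightarrow> real"
    and g :: "real \<Rightarrow> real"
    and x :: "real \<Rightarrow> 'a::{real_inner, complete_space}"
    and xs :: "real \<Rightarrow> real"
    and u :: 'a
    and \<tau> \<tau>s \<alpha> :: real
  assumes tau_pos: "\<tau> > 0" and taus_pos: "\<tau>s > 0" and alpha_pos: "\<alpha> > 0"
    and g_cont: "continuous_on {0..} g" and g_mono: "mono_on {0..} g"
    and g_nonneg: "\<forall>r\<ge>0. g r \<ge> 0" and g0: "g 0 = 0"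
    and V_C1: "\<forall>p. (V has_derivative (\<lambda>(h, k). Vr p * h + Vs p * k)) (at p)"
    and Vr_cont: "continuous_on UNIV Vr" and Vs_cont: "continuous_on UNIV Vs"
    and u_nz: "u \<noteq> 0"
    and ode_x: "\<forall>t\<ge>0. (x has_vector_derivative
                  (1 / \<tau>) *\<^sub>R (- radial_grad Vr (x t) (xs t) + \<alpha> *\<^sub>R u)) (at t within {0..})"
    and ode_xs: "\<forall>t\<ge>0. (xs has_real_derivative
                  (1 / \<tau>s) * (- xs t + g (norm (x t)))) (at t within {0..})"
  shows
    "(\<forall>t\<ge>0. x t \<noteq> 0 \<longrightarrow>
        (\<exists>D. ((\<lambda>s. cosine (x s) u) has_real_derivative D) (at t within {0..}) \<and>
             (\<tau> / \<alpha>) * D = norm u / norm (x t) * (1 - (cosine (x t) u)\<^sup>2)))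
     \<and> (\<forall>t\<ge>0. (\<forall>s\<in>{0..t}. x s \<noteq> 0) \<and> cosine (x 0) u \<in> {-1<..<1} \<longrightarrow>
          cosine (x t) u =
            tanh (\<alpha> * norm u / \<tau> * integral {0..t} (\<lambda>s. 1 / norm (x s))
                  + artanh (cosine (x 0) u)))
     \<and> (\<forall>(a::real) (b::real) (h::real \<Rightarrow> real).
          xs 0 \<ge> 0 \<and> a > 0 \<and> b \<ge> 0 \<and>
          continuous_on {0..} h \<and> mono_on {0..} h \<and> (\<forall>r\<ge>0. h r \<ge> 0) \<and> h 0 = 0 \<and>
          (\<forall>r\<ge>0. \<forall>z\<ge>0. a * r - b \<le> Vr (r, z)) \<and>
          (\<forall>rb\<ge>0. \<forall>r\<in>{0..rb}. \<forall>z\<in>{0..\<bar>xs 0\<bar> + g rb}. Vr (r, z) \<le> h rb * r) \<and>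
          norm u > b / \<alpha>
          \<longrightarrow> ((\<lambda>t. cosine (x t) u) \<longlongrightarrow> 1) at_top)"
proof -
  interpret sysL V Vr Vs g x xs u \<tau> \<tau>s \<alpha>
    by (unfold_locales) (use assms in auto)
  show ?thesis
  proof (intro conjI allI impI)
    fix t :: real assume "t \<ge> 0" "x t \<noteq> 0"
    thus "\<exists>D. ((\<lambda>s. cosine (x s) u) has_real_derivative D) (at t within {0..}) \<and>
             (\<tau> / \<alpha>) * D = norm u / norm (x t) * (1 - (cosine (x t) u)\<^sup>2)"
      using part1 tau_pos alpha_pos by (intro exI[of _ "(\<alpha> * norm u / (\<tau> * norm (x t))) * (1 - (cosine (x t) u)\<^sup>2)"]) auto
  next
    fix t :: real assume "t \<ge> 0" "(\<forall>s\<in>{0..t}. x s \<noteq> 0) \<and> cosine (x 0) u \<in> {-1<..<1}"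
    thus "cosine (x t) u = tanh (\<alpha> * norm u / \<tau> * integral {0..t} (\<lambda>s. 1 / norm (x s))
                  + artanh (cosine (x 0) u))" using part2 by blast
  next
    fix a b :: real and h :: "real \<Rightarrow> real"
    assume "xs 0 \<ge> 0 \<and> a > 0 \<and> b \<ge> 0 \<and>
          continuous_on {0..} h \<and> mono_on {0..} h \<and> (\<forall>r\<ge>0. h r \<ge> 0) \<and> h 0 = 0 \<and>
          (\<forall>r\<ge>0. \<forall>z\<ge>0. a * r - b \<le> Vr (r, z)) \<and>
          (\<forall>rb\<ge>0. \<forall>r\<in>{0..rb}. \<forall>z\<in>{0..\<bar>xs 0\<bar> + g rb}. Vr (r, z) \<le> h rb * r) \<and>
          norm u > b / \<alpha>"
    thus "((\<lambda>t. cosine (x t) u) \<longlongrightarrow> 1) at_top"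
      using part3[of a b h] by blast
  qed
qed

end
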